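(* Let $M$ be the allocation output by the online greedy algorithm on an instance of Model 1 and let $N$ be an optimal offline allocation. For each day $d_i\in D$, let $X_i$ be the set of Type 2 agents that $N$ allocates on day $d_i$, and let $Y_i$ be the set of agents that $M$ allocates on day $d_i$. Then $|X_i|\le |Y_i|$.
   Context: Model 1: finite sets of agents $A$, categories $C$ and days $D=\{d_1,\dots,d_T\}$; each agent is eligible for a subset of categories; daily supply $s_i$ for day $d_i$; daily quota $q_{ik}$ for category $c_k$ on day $d_i$; each agent $a_j$ has a priority factor $\alpha_j>0$ and a set of available days; discount factor $\delta\in(0,1)$. An allocation maps each agent to a pair (eligible category, available day) or to $\emptyset$, with at most $q_{ik}$ agents getting $(c_k,d_i)$ and at most $s_i$ agents getting day $d_i$; agent $a_j$ allocated on day $d_i$ has utility $\alpha_j\delta^{i-1}$, and an optimal offline allocation maximizes total utility. The online greedy algorithm: on each day $d_i$, let $A_i$ be the agents available on $d_i$ not yet allocated; form the bipartite graph between $A_i$ and $C$ with an edge $(a_j,c_k)$ when $a_j$ is eligible for $c_k$, of weight $\alpha_j\delta^{i-1}$, agents of capacity $1$ and $c_k$ of capacity $q_{ik}$; compute a maximum-weight $b$-matching of size at most $s_i$ and allocate accordingly on day $d_i$. An agent allocated by $N$ is of Type 1 if $M$ allocates it on a strictly earlier day than $N$ does; every other agent allocated by $N$ is of Type 2. *)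

theory Defs
  imports Complex_Main
begin

text \<open>Model 1. Agents have type 'a, categories type 'c; days are d_1..d_T, represented by
  the natural numbers 1..T. An allocation maps each agent to Some (category, day) or None.\<close>

definition model1_instance ::
  "'a set \<Rightarrow> 'c set \<Rightarrow> nat \<Rightarrow> ('a \<Rightarrow> 'c set) \<Rightarrow> ('a \<Rightarrow> real) \<Rightarrow> ('a \<Rightarrow> nat set) \<Rightarrow> real \<Rightarrow> bool"
where
  "model1_instance A C T elig \<alpha> avail \<delta> \<longleftrightarrow>
     finite A \<and> finite C \<and>
     (\<forall>a\<in>A. elig a \<subseteq> C) \<and>
     (\<forall>a\<in>A. \<alpha> a > 0) \<and>
     (\<forall>a\<in>A. avail a \<subseteq> {1..T}) \<and>
     0 < \<delta> \<and> \<delta> < 1"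

definition valid_alloc ::
  "'a set \<Rightarrow> 'c set \<Rightarrow> nat \<Rightarrow> ('a \<Rightarrow> 'c set) \<Rightarrow> (nat \<Rightarrow> nat) \<Rightarrow> (nat \<Rightarrow> 'c \<Rightarrow> nat)
    \<Rightarrow> ('a \<Rightarrow> nat set) \<Rightarrow> ('a \<Rightarrow> ('c \<times> nat) option) \<Rightarrow> bool"
where
  "valid_alloc A C T elig s q avail X \<longleftrightarrow>
     (\<forall>a. a \<notin> A \<longrightarrow> X a = None) \<and>
     (\<forall>a\<in>A. \<forall>c i. X a = Some (c, i) \<longrightarrow> c \<in> elig a \<and> i \<in> avail a) \<and>
     (\<forall>i c. card {a\<in>A. X a = Some (c, i)} \<le> q i c) \<and>
     (\<forall>i. card {a\<in>A. \<exists>c. X a = Some (c, i)} \<le> s i)"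

definition utility ::
  "'a set \<Rightarrow> ('a \<Rightarrow> real) \<Rightarrow> real \<Rightarrow> ('a \<Rightarrow> ('c \<times> nat) option) \<Rightarrow> real"
where
  "utility A \<alpha> \<delta> X =
     (\<Sum>a\<in>A. case X a of None \<Rightarrow> 0 | Some (c, i) \<Rightarrow> \<alpha> a * \<delta> ^ (i - 1))"

definition optimal_alloc ::
  "'a set \<Rightarrow> 'c set \<Rightarrow> nat \<Rightarrow> ('a \<Rightarrow> 'c set) \<Rightarrow> (nat \<Rightarrow> nat) \<Rightarrow> (nat \<Rightarrow> 'c \<Rightarrow> nat)
    \<Rightarrow> ('a \<Rightarrow> real) \<Rightarrow> ('a \<Rightarrow> nat set) \<Rightarrow> real \<Rightarrow> ('a \<Rightarrow> ('c \<times> nat) option) \<Rightarrow> bool"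
where
  "optimal_alloc A C T elig s q \<alpha> avail \<delta> N \<longleftrightarrow>
     valid_alloc A C T elig s q avail N \<and>
     (\<forall>X. valid_alloc A C T elig s q avail X \<longrightarrow> utility A \<alpha> \<delta> X \<le> utility A \<alpha> \<delta> N)"

definition remaining_agents ::
  "'a set \<Rightarrow> ('a \<Rightarrow> nat set) \<Rightarrow> ('a \<Rightarrow> ('c \<times> nat) option) \<Rightarrow> nat \<Rightarrow> 'a set"
where
  "remaining_agents A avail M i =
     {a\<in>A. i \<in> avail a \<and> \<not> (\<exists>c j. j < i \<and> M a = Some (c, j))}"

text \<open>b-matchings of size at most s i in the day-i bipartite graph between the agent set R
  (capacity 1) and the categories (capacity q i c), edges (a,c) with a eligible for c.\<close>
definition day_bmatching ::
  "'c set \<Rightarrow> ('a \<Rightarrow> 'c set) \<Rightarrow> (nat \<Rightarrow> nat) \<Rightarrow> (nat \<Rightarrow> 'c \<Rightarrow> nat) \<Rightarrow> 'a set \<Rightarrow> nat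
    \<Rightarrow> ('a \<times> 'c) set \<Rightarrow> bool"
where
  "day_bmatching C elig s q R i E \<longleftrightarrow>
     (\<forall>(a, c)\<in>E. a \<in> R \<and> c \<in> C \<and> c \<in> elig a) \<and>
     (\<forall>a c c'. (a, c) \<in> E \<longrightarrow> (a, c') \<in> E \<longrightarrow> c = c') \<and>
     (\<forall>c. card {a. (a, c) \<in> E} \<le> q i c) \<and>
     card E \<le> s i"

definition bmatching_weight :: "('a \<Rightarrow> real) \<Rightarrow> real \<Rightarrow> nat \<Rightarrow> ('a \<times> 'c) set \<Rightarrow> real"
where
  "bmatching_weight \<alpha> \<delta> i E = (\<Sum>(a, c)\<in>E. \<alpha> a * \<delta> ^ (i - 1))"

text \<open>M is a possible output of the online greedy algorithm: on each day i the pairs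
  allocated on day i form a maximum-weight b-matching (of size at most s i) among the
  agents available on day i and not yet allocated.\<close>
definition greedy_alloc ::
  "'a set \<Rightarrow> 'c set \<Rightarrow> nat \<Rightarrow> ('a \<Rightarrow> 'c set) \<Rightarrow> (nat \<Rightarrow> nat) \<Rightarrow> (nat \<Rightarrow> 'c \<Rightarrow> nat)
    \<Rightarrow> ('a \<Rightarrow> real) \<Rightarrow> ('a \<Rightarrow> nat set) \<Rightarrow> real \<Rightarrow> ('a \<Rightarrow> ('c \<times> nat) option) \<Rightarrow> bool"
where
  "greedy_alloc A C T elig s q \<alpha> avail \<delta> M \<longleftrightarrow>
     (\<forall>a. a \<notin> A \<longrightarrow> M a = None) \<and>
     (\<forall>a c i. M a = Some (c, i) \<longrightarrow> i \<in> {1..T}) \<and>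
     (\<forall>i\<in>{1..T}.
        let R = remaining_agents A avail M i;
            E = {(a, c). M a = Some (c, i)}
        in day_bmatching C elig s q R i E \<and>
           (\<forall>E'. day_bmatching C elig s q R i E' \<longrightarrow>
                 bmatching_weight \<alpha> \<delta> i E' \<le> bmatching_weight \<alpha> \<delta> i E))"

definition type2_on_day ::
  "'a set \<Rightarrow> ('a \<Rightarrow> ('c \<times> nat) option) \<Rightarrow> ('a \<Rightarrow> ('c \<times> nat) option) \<Rightarrow> nat \<Rightarrow> 'a set"
where
  "type2_on_day A M N i =
     {a\<in>A. (\<exists>c. N a = Some (c, i)) \<and> \<not> (\<exists>c j. M a = Some (c, j) \<and> j < i)}"

definition allocated_on_day :: "'a set \<Rightarrow> ('a \<Rightarrow> ('c \<times> nat) option) \<Rightarrow> nat \<Rightarrow> 'a set"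
where
  "allocated_on_day A M i = {a\<in>A. \<exists>c. M a = Some (c, i)}"

end

theory Submission
  imports Defs
begin

lemma count_exists:
  assumes "finite S" "finite S'" "card S < card S'"
  shows "\<exists>c. card {a\<in>S. f a = c} < card {a\<in>S'. g a = c}"
proof (rule ccontr)
  assume "\<not> ?thesis"
  hence le: "\<And>c. card {a\<in>S'. g a = c} \<le> card {a\<in>S. f a = c}" by (simp add: not_less)
  define K where "K = f ` S \<union> g ` S'"
  have fK: "finite K" using assms by (simp add: K_def)
  have "card S' = (\<Sum>c\<in>K. card {a\<in>S'. g a = c})"
    using sum.group[OF assms(2) fK, of g "\<lambda>_. 1::nat"] by (simp add: K_def)
  also have "\<dots> \<le> (\<Sum>c\<in>K. card {a\<in>S. f a = c})" by (rule sum_mono) (rule le)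
  also have "\<dots> = card S"
    using sum.group[OF assms(1) fK, of f "\<lambda>_. 1::nat"] by (simp add: K_def)
  finally show False using assms(3) by simp
qed

lemma augment:
  assumes fin: "finite S" "finite S'"
  and qf: "\<forall>c. card {a\<in>S. f a = c} \<le> Q c"
  and qg: "\<forall>c. card {a\<in>S'. g a = c} \<le> Q c"
  and lt: "card S < card S'"
  shows "\<exists>x\<in>S'-S. \<exists>h. h x = g x \<and> (\<forall>a\<in>S. h a = f a \<or> (a \<in> S' \<and> h a = g a)) \<and>
            (\<forall>c. card {a\<in>insert x S. h a = c} \<le> Q c)"
  using qf
proof (induction "card {a\<in>S\<inter>S'. f a \<noteq> g a}" arbitrary: f rule: less_induct)
  case less
  show ?case
  proof (cases "\<exists>x\<in>S'-S. card {a\<in>S. f a = g x} < Q (g x)")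
    case True
    then obtain x where x: "x \<in> S'-S" "card {a\<in>S. f a = g x} < Q (g x)" by blast
    define h where "h = f(x := g x)"
    have "card {a\<in>insert x S. h a = c} \<le> Q c" for c
    proof (cases "c = g x")
      case True
      have "{a\<in>insert x S. h a = c} = insert x {a\<in>S. f a = c}"
        using x True by (auto simp: h_def)
      hence "card {a\<in>insert x S. h a = c} = Suc (card {a\<in>S. f a = c})"
        using x fin by simp
      thus ?thesis using x True by simp
    next
      case False
      have "{a\<in>insert x S. h a = c} = {a\<in>S. f a = c}"
        using x False by (auto simp: h_def)
      thus ?thesis using less.prems by simp
    qed
    moreover have "\<forall>a\<in>S. h a = f a \<or> (a \<in> S' \<and> h a = g a)" using x by (auto simp: h_def)
    moreover have "h x = g x" by (simp add: h_def)
    ultimately show ?thesis using x(1) by blast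
  next
    case False
    hence full: "\<forall>x\<in>S'-S. Q (g x) \<le> card {a\<in>S. f a = g x}" by (simp add: not_less)
    obtain c where c: "card {a\<in>S. f a = c} < card {a\<in>S'. g a = c}"
      using count_exists[OF fin lt, of f g] by blast
    have sub: "{a\<in>S'. g a = c} \<subseteq> S \<inter> S'"
    proof
      fix y assume y: "y \<in> {a\<in>S'. g a = c}"
      show "y \<in> S \<inter> S'"
      proof (rule ccontr)
        assume "y \<notin> S \<inter> S'"
        hence "y \<in> S' - S" using y by auto
        hence "Q c \<le> card {a\<in>S. f a = c}" using full y by auto
        moreover have "card {a\<in>S'. g a = c} \<le> Q c" using qg by blast
        ultimately show False using c by simp
      qed
    qed
    have "\<exists>a\<in>S\<inter>S'. g a = c \<and> f a \<noteq> c"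
    proof (rule ccontr)
      assume "\<not> ?thesis"
      hence "{a\<in>S'. g a = c} \<subseteq> {a\<in>S. f a = c}" using sub by auto
      hence "card {a\<in>S'. g a = c} \<le> card {a\<in>S. f a = c}" using fin by (intro card_mono) auto
      thus False using c by simp
    qed
    then obtain a where a: "a \<in> S\<inter>S'" "g a = c" "f a \<noteq> c" by blast
    define f' where "f' = f(a := c)"
    have q': "\<forall>d. card {b\<in>S. f' b = d} \<le> Q d"
    proof
      fix d
      show "card {b\<in>S. f' b = d} \<le> Q d"
      proof (cases "d = c")
        case True
        have "{b\<in>S. f' b = d} = insert a {b\<in>S. f b = c}" using a True by (auto simp: f'_def)
        hence "card {b\<in>S. f' b = d} = Suc (card {b\<in>S. f b = c})" using a fin by simp
        moreover have "card {a\<in>S'. g a = c} \<le> Q c" using qg by blast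
        ultimately show ?thesis using c True by simp
      next
        case False
        have "{b\<in>S. f' b = d} \<subseteq> {b\<in>S. f b = d}" using False by (auto simp: f'_def)
        hence "card {b\<in>S. f' b = d} \<le> card {b\<in>S. f b = d}" using fin by (intro card_mono) auto
        thus ?thesis using less.prems by (meson order_trans)
      qed
    qed
    have eq: "{b\<in>S\<inter>S'. f' b \<noteq> g b} = {b\<in>S\<inter>S'. f b \<noteq> g b} - {a}"
      using a by (auto simp: f'_def)
    have "card {b\<in>S\<inter>S'. f' b \<noteq> g b} < card {b\<in>S\<inter>S'. f b \<noteq> g b}"
      unfolding eq using a fin by (intro card_Diff1_less) auto
    from less.hyps[OF this q'] obtain x h where xh: "x \<in> S'-S" "h x = g x"
      "\<forall>b\<in>S. h b = f' b \<or> (b \<in> S' \<and> h b = g b)" "\<forall>d. card {b\<in>insert x S. h b = d} \<le> Q d" by blast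
    have "\<forall>b\<in>S. h b = f b \<or> (b \<in> S' \<and> h b = g b)" 
    proof
      fix b assume b: "b \<in> S"
      show "h b = f b \<or> (b \<in> S' \<and> h b = g b)"
        using xh(3) b a by (cases "b = a") (auto simp: f'_def)
    qed
    thus ?thesis using xh by blast
  qed
qed

theorem lemma2:
  fixes A :: "'a set" and C :: "'c set" and T :: nat
    and elig :: "'a \<Rightarrow> 'c set" and s :: "nat \<Rightarrow> nat" and q :: "nat \<Rightarrow> 'c \<Rightarrow> nat"
    and \<alpha> :: "'a \<Rightarrow> real" and avail :: "'a \<Rightarrow> nat set" and \<delta> :: real
    and M N :: "'a \<Rightarrow> ('c \<times> nat) option" and i :: nat
  assumes "model1_instance A C T elig \<alpha> avail \<delta>"
    and "greedy_alloc A C T elig s q \<alpha> avail \<delta> M"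
    and "optimal_alloc A C T elig s q \<alpha> avail \<delta> N"
    and "i \<in> {1..T}"
  shows "card (type2_on_day A M N i) \<le> card (allocated_on_day A M i)"
proof (rule ccontr)
  assume contra: "\<not> ?thesis"
  define S where "S = allocated_on_day A M i"
  define S' where "S' = type2_on_day A M N i"
  define f where "f a = fst (the (M a))" for a
  define g where "g a = fst (the (N a))" for a
  define R where "R = remaining_agents A avail M i"
  define E where "E = {(a, c). M a = Some (c, i)}"
  have inst: "finite A" "\<forall>a\<in>A. elig a \<subseteq> C" "\<forall>a\<in>A. \<alpha> a > 0" "0 < \<delta>"
    using assms(1) by (auto simp: model1_instance_def)
  have Mout: "\<And>a. a \<notin> A \<Longrightarrow> M a = None" using assms(2) by (simp add: greedy_alloc_def)
  have gr: "day_bmatching C elig s q R i E"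
     "\<And>E'. day_bmatching C elig s q R i E' \<Longrightarrow> bmatching_weight \<alpha> \<delta> i E' \<le> bmatching_weight \<alpha> \<delta> i E"
    using assms(2,4) unfolding greedy_alloc_def R_def E_def Let_def by blast+
  have vN: "valid_alloc A C T elig s q avail N" using assms(3) by (simp add: optimal_alloc_def)
  have finS: "finite S" "finite S'" using inst(1) by (auto simp: S_def S'_def allocated_on_day_def type2_on_day_def)
  have Eimg: "E = (\<lambda>a. (a, f a)) ` S"
    using Mout by (force simp: E_def S_def allocated_on_day_def f_def)
  have fS: "\<And>a. a \<in> S \<Longrightarrow> M a = Some (f a, i)"
    by (auto simp: S_def allocated_on_day_def f_def)
  have gS': "\<And>a. a \<in> S' \<Longrightarrow> N a = Some (g a, i) \<and> a \<in> A"
    by (auto simp: S'_def type2_on_day_def g_def)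
  have qf: "\<forall>c. card {a\<in>S. f a = c} \<le> q i c"
  proof
    fix c
    have "{a\<in>S. f a = c} = {a. (a, c) \<in> E}" unfolding Eimg by auto
    thus "card {a\<in>S. f a = c} \<le> q i c" using gr(1) by (simp add: day_bmatching_def)
  qed
  have qg: "\<forall>c. card {a\<in>S'. g a = c} \<le> q i c"
  proof
    fix c
    have "{a\<in>S'. g a = c} \<subseteq> {a\<in>A. N a = Some (c, i)}" using gS' by auto
    hence "card {a\<in>S'. g a = c} \<le> card {a\<in>A. N a = Some (c, i)}"
      using inst(1) by (intro card_mono) auto
    moreover have "card {a\<in>A. N a = Some (c, i)} \<le> q i c" using vN unfolding valid_alloc_def by blast
    ultimately show "card {a\<in>S'. g a = c} \<le> q i c" by linarith
  qed
  have S's: "card S' \<le> s i"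
  proof -
    have "S' \<subseteq> {a\<in>A. \<exists>c. N a = Some (c, i)}" using gS' by blast
    hence "card S' \<le> card {a\<in>A. \<exists>c. N a = Some (c, i)}"
      using inst(1) by (intro card_mono) auto
    moreover have "card {a\<in>A. \<exists>c. N a = Some (c, i)} \<le> s i" using vN unfolding valid_alloc_def by blast
    ultimately show ?thesis by linarith
  qed
  have lt: "card S < card S'" using contra by (simp add: S_def S'_def)
  obtain x h where xh: "x \<in> S' - S" "h x = g x" "\<forall>a\<in>S. h a = f a \<or> (a \<in> S' \<and> h a = g a)"
    "\<forall>c. card {a\<in>insert x S. h a = c} \<le> q i c"
    using augment[OF finS qf qg lt] by blast
  define E2 where "E2 = (\<lambda>a. (a, h a)) ` insert x S"
  have ER: "\<forall>(a, c)\<in>E. a \<in> R \<and> c \<in> C \<and> c \<in> elig a" using gr(1) by (simp add: day_bmatching_def)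
  have S'R: "a \<in> R \<and> g a \<in> elig a" if "a \<in> S'" for a
  proof -
    have "N a = Some (g a, i)" "a \<in> A" using gS' that by auto
    hence "g a \<in> elig a \<and> i \<in> avail a" using vN by (simp add: valid_alloc_def)
    moreover have "\<not> (\<exists>c j. j < i \<and> M a = Some (c, j))" using that by (auto simp: S'_def type2_on_day_def)
    ultimately show ?thesis using \<open>a \<in> A\<close> by (simp add: R_def remaining_agents_def)
  qed
  have SR: "a \<in> R \<and> f a \<in> elig a \<and> a \<in> A" if "a \<in> S" for a
    using ER that unfolding Eimg using that by (auto simp: S_def allocated_on_day_def)
  have cardE2: "card E2 = Suc (card S)"
    unfolding E2_def using xh(1) finS by (subst card_image) (auto intro: inj_onI)
  have dm: "day_bmatching C elig s q R i E2"
    unfolding day_bmatching_def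
  proof (intro conjI allI impI)
    show "\<forall>(a, c)\<in>E2. a \<in> R \<and> c \<in> C \<and> c \<in> elig a"
    proof (clarify)
      fix a c assume "(a, c) \<in> E2"
      hence a: "a \<in> insert x S" "c = h a" by (auto simp: E2_def)
      have "a \<in> R \<and> c \<in> elig a \<and> a \<in> A"
      proof (cases "a = x")
        case True thus ?thesis using a xh S'R gS' by auto
      next
        case False
        hence "a \<in> S" using a by auto
        thus ?thesis using xh(3) a SR S'R by auto
      qed
      thus "a \<in> R \<and> c \<in> C \<and> c \<in> elig a" using inst(2) by auto
    qed
  next
    fix a c c' assume "(a, c) \<in> E2" "(a, c') \<in> E2"
    thus "c = c'" by (auto simp: E2_def)
  next
    fix c
    have "{a. (a, c) \<in> E2} = {a\<in>insert x S. h a = c}" by (auto simp: E2_def)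
    thus "card {a. (a, c) \<in> E2} \<le> q i c" using xh(4) by simp
  next
    show "card E2 \<le> s i" using cardE2 lt S's by simp
  qed
  have wE: "bmatching_weight \<alpha> \<delta> i E = (\<Sum>a\<in>S. \<alpha> a * \<delta> ^ (i - 1))"
    unfolding bmatching_weight_def Eimg by (subst sum.reindex) (auto intro: inj_onI)
  have wE2: "bmatching_weight \<alpha> \<delta> i E2 = (\<Sum>a\<in>insert x S. \<alpha> a * \<delta> ^ (i - 1))"
    unfolding bmatching_weight_def E2_def by (subst sum.reindex) (auto intro: inj_onI)
  also have "\<dots> = \<alpha> x * \<delta> ^ (i - 1) + (\<Sum>a\<in>S. \<alpha> a * \<delta> ^ (i - 1))"
    using xh(1) finS by simp
  finally have "bmatching_weight \<alpha> \<delta> i E2 = \<alpha> x * \<delta> ^ (i - 1) + bmatching_weight \<alpha> \<delta> i E"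
    using wE by simp
  moreover have "\<alpha> x * \<delta> ^ (i - 1) > 0" using inst gS' xh(1) by auto
  moreover note gr(2)[OF dm]
  ultimately show False by simp
qed

end
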